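(* For every $n>0$, there are finite alphabets $\Sigma_I,\Sigma_O$ and a language $L_n''\subseteq(\Sigma_I\times\Sigma_O)^\omega$ recognized by a finitary Büchi automaton with costs $\mathcal{A}_n''$ with $O(n^2)$ states such that for every $j\in\{0,1,\ldots,n\}$, an optimal winning strategy for Player $O$ in $\Gamma_{f_j}(L_n'')$ exists and has cost $2(n+1)-j$.
   Context: A parity automaton with costs is a tuple $\mathcal{A}=(Q,\Sigma,q_I,\delta,\Omega,\mathrm{Cst})$ with a finite set $Q$ of states, a finite alphabet $\Sigma$, an initial state $q_I$, a deterministic complete transition function $\delta\colon Q\times\Sigma\to Q$, a coloring $\Omega\colon Q\to\mathbb{N}$, and a cost function $\mathrm{Cst}$ assigning to every transition $(q,a,\delta(q,a))$ either $\epsilon$ or $\mathtt{i}$ (increment-transition). A finitary Büchi automaton is one in which every transition is an increment-transition and $\Omega(Q)=\{1,2\}$. The run on $a_0a_1\cdots$ is $(q_0,a_0,q_1)(q_1,a_1,q_2)\cdots$ with $q_0=q_I$, $q_{j+1}=\delta(q_j,a_j)$; the cost of a finite run is its number of increment-transitions. For odd $c$, $\mathrm{Ans}(c)=\{c'\in\Omega(Q)\mid c'>c,\ c'\text{ even}\}$. For an infinite run $\rho$ and $n$, $\mathrm{Cor}(\rho,n)=0$ if $\Omega(q_n)$ is even, and otherwise it is the minimal cost of $(q_n,a_n,q_{n+1})\cdots(q_{n'-1},a_{n'-1},q_{n'})$ over $n'>n$ with $\Omega(q_{n'})\in\mathrm{Ans}(\Omega(q_n))$ ($\min\emptyset=\infty$).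 The run is accepting if $\limsup_n\mathrm{Cor}(\rho,n)<\infty$; $L(\mathcal{A})$ is the set of infinite words whose run is accepting. A delay function is a map $f\colon\mathbb{N}\to\mathbb{N}\setminus\{0\}$; for $k\ge0$, $f_k$ denotes the delay function with $f_k(0)=k+1$ and $f_k(i)=1$ for $i>0$. For $L\subseteq(\Sigma_I\times\Sigma_O)^\omega$, the delay game $\Gamma_f(L)$ is played in rounds $i=0,1,2,\ldots$: in round $i$, Player $I$ picks $u_i\in\Sigma_I^{f(i)}$, then Player $O$ picks $v_i\in\Sigma_O$. Player $O$ wins the play if the outcome, i.e., the word over $\Sigma_I\times\Sigma_O$ pairing $u_0u_1u_2\cdots$ and $v_0v_1v_2\cdots$ letterwise, is in $L$. A strategy for Player $O$ is a map $\tau_O\colon\Sigma_I^*\to\Sigma_O$; a play is consistent with $\tau_O$ if $v_i=\tau_O(u_0\cdots u_i)$ for all $i$; $\tau_O$ is winning if every consistent play is won by Player $O$. For a winning strategy $\tau_O$ in $\Gamma_f(L(\mathcal{A}))$, its cost is $\mathrm{Cst}_\mathcal{A}(\tau_O)=\sup_w\limsup_{n\to\infty}\mathrm{Cor}(\rho(w),n)$, where $w$ ranges over outcomes of plays consistent with $\tau_O$ and $\rho(w)$ is the run of $\mathcal{A}$ on $w$; a winning strategy is optimal if its cost is minimal among all winning strategies of Player $O$ in $\Gamma_f(L(\mathcal{A}))$. *)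

theory Defs
  imports Main "HOL-Library.Extended_Nat" "HOL-Library.Liminf_Limsup"
begin

text \<open>The alphabet is stored explicitly; the
transition function is deterministic and complete on states x alphabet.
incr A q a holds iff the transition (q, a, delta q a) is an increment-transition
(otherwise its cost is epsilon).\<close>

record ('q, 'a) pac =
  states :: "'q set"
  alph   :: "'a set"
  init   :: 'q
  delta  :: "'q \<Rightarrow> 'a \<Rightarrow> 'q"
  color  :: "'q \<Rightarrow> nat"
  incr   :: "'q \<Rightarrow> 'a \<Rightarrow> bool"

definition pac_wf :: "('q, 'a) pac \<Rightarrow> bool" where
  "pac_wf A \<longleftrightarrow> finite (states A) \<and> finite (alph A) \<and> init A \<in> states A \<and>
     (\<forall>q\<in>states A. \<forall>a\<in>alph A. delta A q a \<in> states A)"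

definition finitary_buchi :: "('q, 'a) pac \<Rightarrow> bool" where
  "finitary_buchi A \<longleftrightarrow> pac_wf A \<and>
     (\<forall>q\<in>states A. \<forall>a\<in>alph A. incr A q a) \<and> color A ` states A = {1, 2}"

definition omega_words :: "'a set \<Rightarrow> (nat \<Rightarrow> 'a) set" where
  "omega_words S = {w. \<forall>i. w i \<in> S}"

primrec run :: "('q, 'a) pac \<Rightarrow> (nat \<Rightarrow> 'a) \<Rightarrow> nat \<Rightarrow> 'q" where
  "run A w 0 = init A"
| "run A w (Suc n) = delta A (run A w n) (w n)"

definition seg_cost :: "('q, 'a) pac \<Rightarrow> (nat \<Rightarrow> 'a) \<Rightarrow> nat \<Rightarrow> nat \<Rightarrow> nat" where
  "seg_cost A w n n' = card {k. n \<le> k \<and> k < n' \<and> incr A (run A w k) (w k)}"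

definition Ans :: "('q, 'a) pac \<Rightarrow> nat \<Rightarrow> nat set" where
  "Ans A c = {c' \<in> color A ` states A. c < c' \<and> even c'}"

definition Cor :: "('q, 'a) pac \<Rightarrow> (nat \<Rightarrow> 'a) \<Rightarrow> nat \<Rightarrow> enat" where
  "Cor A w n = (if even (color A (run A w n)) then 0
     else (INF n' \<in> {n'. n < n' \<and> color A (run A w n') \<in> Ans A (color A (run A w n))}.
             enat (seg_cost A w n n')))"

definition accepting :: "('q, 'a) pac \<Rightarrow> (nat \<Rightarrow> 'a) \<Rightarrow> bool" where
  "accepting A w \<longleftrightarrow> limsup (Cor A w) < \<infinity>"

definition lang :: "('q, 'a) pac \<Rightarrow> (nat \<Rightarrow> 'a) set" where
  "lang A = {w \<in> omega_words (alph A). accepting A w}"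

definition delay_fun :: "(nat \<Rightarrow> nat) \<Rightarrow> bool" where
  "delay_fun f \<longleftrightarrow> (\<forall>i. f i > 0)"

definition fk :: "nat \<Rightarrow> nat \<Rightarrow> nat" where
  "fk k i = (if i = 0 then k + 1 else 1)"

text \<open>Number of input letters chosen by Player I up to and including round i.\<close>
definition prefix_len :: "(nat \<Rightarrow> nat) \<Rightarrow> nat \<Rightarrow> nat" where
  "prefix_len f i = (\<Sum>l\<le>i. f l)"

text \<open>Outcome of the play in which Player I's letters u_0 u_1 ... concatenate to alpha
and Player O plays consistently with tau: v_i = tau (u_0 ... u_i).\<close>
definition outcome :: "(nat \<Rightarrow> nat) \<Rightarrow> ('i list \<Rightarrow> 'o) \<Rightarrow> (nat \<Rightarrow> 'i) \<Rightarrow> nat \<Rightarrow> 'i \<times> 'o" where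
  "outcome f tau alpha = (\<lambda>i. (alpha i, tau (map alpha [0..<prefix_len f i])))"

definition strategy :: "'i set \<Rightarrow> 'o set \<Rightarrow> ('i list \<Rightarrow> 'o) \<Rightarrow> bool" where
  "strategy SI SO tau \<longleftrightarrow> (\<forall>x. tau x \<in> SO)"

definition winning :: "(nat \<Rightarrow> nat) \<Rightarrow> 'i set \<Rightarrow> 'o set \<Rightarrow> (nat \<Rightarrow> 'i \<times> 'o) set
    \<Rightarrow> ('i list \<Rightarrow> 'o) \<Rightarrow> bool" where
  "winning f SI SO L tau \<longleftrightarrow> strategy SI SO tau \<and>
     (\<forall>alpha \<in> omega_words SI. outcome f tau alpha \<in> L)"

definition strat_cost :: "('q, 'i \<times> 'o) pac \<Rightarrow> (nat \<Rightarrow> nat) \<Rightarrow> 'i set \<Rightarrow> ('i list \<Rightarrow> 'o) \<Rightarrow> enat" where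
  "strat_cost A f SI tau = (SUP alpha \<in> omega_words SI. limsup (Cor A (outcome f tau alpha)))"

definition optimal :: "('q, 'i \<times> 'o) pac \<Rightarrow> (nat \<Rightarrow> nat) \<Rightarrow> 'i set \<Rightarrow> 'o set \<Rightarrow> ('i list \<Rightarrow> 'o) \<Rightarrow> bool" where
  "optimal A f SI SO tau \<longleftrightarrow> winning f SI SO (lang A) tau \<and>
     (\<forall>tau'. winning f SI SO (lang A) tau' \<longrightarrow> strat_cost A f SI tau \<le> strat_cost A f SI tau')"

end

theory Submission
  imports Defs
begin


definition PP :: "nat \<Rightarrow> nat" where "PP n = 2*n+4"
definition TT :: "nat \<Rightarrow> nat" where "TT n = 2*n+2"

definition stepS :: "nat \<Rightarrow> nat \<Rightarrow> nat \<Rightarrow> nat \<Rightarrow> nat \<Rightarrow> nat" where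
 "stepS n r s u v = (if s = 6 then 6
   else if r = TT n + 1 then 0
   else if s = 0 then (if r < TT n then (if v \<le> 1 then 1 + v else 0)
                        else if r = TT n \<and> v = u then 5 else 6)
   else if s \<le> 4 then (if r < TT n then 3 + (s+1) mod 2
                        else if r = TT n \<and> u = (s+1) mod 2 then 5 else 6)
   else 6)"

lemma stepS_le: "stepS n r s u v \<le> 6"
  using mod_less_divisor[of 2 "s+1"] unfolding stepS_def by auto

definition aut :: "nat \<Rightarrow> (nat, nat \<times> nat) pac" where
"aut n = (| states = {q. q div 8 < PP n \<and> q mod 8 \<le> 6},
   alph = {0,1::nat} \<times> {0,1,2::nat}, init = 0,
   delta = (\<lambda>q a. 8 * (if q div 8 = PP n - 1 then 0 else q div 8 + 1)
                 + stepS n (q div 8) (q mod 8) (fst a) (snd a)),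
   color = (\<lambda>q. if q = 0 \<or> q mod 8 = 1 \<or> q mod 8 = 2 \<or> q mod 8 = 5 then 2 else 1),
   incr = (\<lambda>_ _. True) |)"

lemma aut_sel[simp]:
  "states (aut n) = {q. q div 8 < PP n \<and> q mod 8 \<le> 6}"
  "alph (aut n) = {0,1::nat} \<times> {0,1,2::nat}"
  "init (aut n) = 0"
  "delta (aut n) q a = 8 * (if q div 8 = PP n - 1 then 0 else q div 8 + 1)
                 + stepS n (q div 8) (q mod 8) (fst a) (snd a)"
  "incr (aut n) q a = True"
  by (simp_all add: aut_def)

lemma aut_color: "color (aut n) q = (if q = 0 \<or> q mod 8 = 1 \<or> q mod 8 = 2 \<or> q mod 8 = 5 then 2 else 1)"
  by (simp add: aut_def)

lemma PP_pos: "PP n > 0" by (simp add: PP_def)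

lemma enc_div: "s < 8 \<Longrightarrow> (8*x + s) div 8 = (x::nat)"
  by simp
lemma enc_mod: "s < 8 \<Longrightarrow> (8*x + s) mod 8 = (s::nat)"
  by simp

lemma suc_mod: "(if t mod PP n = PP n - 1 then 0 else t mod PP n + 1) = Suc t mod PP n"
proof -
  have "Suc t mod PP n = (if Suc (t mod PP n) = PP n then 0 else Suc (t mod PP n))"
    by (rule mod_Suc)
  moreover have "(t mod PP n = PP n - 1) = (Suc (t mod PP n) = PP n)"
    using PP_pos[of n] by linarith
  ultimately show ?thesis by simp
qed

lemma run_Suc_eq: "run (aut n) w (Suc t) = 8 * (if run (aut n) w t div 8 = PP n - 1 then 0 else run (aut n) w t div 8 + 1)
     + stepS n (run (aut n) w t div 8) (run (aut n) w t mod 8) (fst (w t)) (snd (w t))"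
  by (simp only: run.simps aut_sel)

lemma run_div: "run (aut n) w t div 8 = t mod PP n \<and> run (aut n) w t mod 8 \<le> 6"
proof (induction t)
  case 0 then show ?case by simp
next
  case (Suc t)
  have IH: "run (aut n) w t div 8 = t mod PP n" using Suc by blast
  define S where "S = stepS n (run (aut n) w t div 8) (run (aut n) w t mod 8) (fst (w t)) (snd (w t))"
  have h: "S \<le> 6" unfolding S_def by (rule stepS_le)
  have e: "run (aut n) w (Suc t) = 8 * (Suc t mod PP n) + S"
    unfolding run_Suc_eq IH suc_mod S_def ..
  show ?case unfolding e using h enc_div[of S] enc_mod[of S] by simp
qed

definition st :: "nat \<Rightarrow> (nat \<Rightarrow> nat \<times> nat) \<Rightarrow> nat \<Rightarrow> nat" where
  "st n w t = run (aut n) w t mod 8"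

lemma run_enc: "run (aut n) w t = 8 * (t mod PP n) + st n w t"
  using run_div[of n w t] unfolding st_def by (metis div_mult_mod_eq mult.commute)

lemma st_le: "st n w t \<le> 6" using run_div unfolding st_def by blast

lemma st_0[simp]: "st n w 0 = 0" by (simp add: st_def)

lemma st_Suc: "st n w (Suc t) = stepS n (t mod PP n) (st n w t) (fst (w t)) (snd (w t))"
proof -
  define S where "S = stepS n (t mod PP n) (st n w t) (fst (w t)) (snd (w t))"
  have h: "S \<le> 6" unfolding S_def by (rule stepS_le)
  have "run (aut n) w (Suc t) = 8 * (if t mod PP n = PP n - 1 then 0 else t mod PP n + 1) + S"
    unfolding run_Suc_eq S_def st_def using run_div[of n w t] by simp
  then have "run (aut n) w (Suc t) = 8 * (Suc t mod PP n) + S" unfolding suc_mod .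
  then have "st n w (Suc t) = S" unfolding st_def using h enc_mod[of S] by simp
  then show ?thesis unfolding S_def .
qed

lemma col_run: "color (aut n) (run (aut n) w t) =
   (if (t mod PP n = 0 \<and> st n w t = 0) \<or> st n w t = 1 \<or> st n w t = 2 \<or> st n w t = 5 then 2 else 1)"
  using run_enc[of n w t] st_le[of n w t] by (auto simp: aut_color)

lemma col_img: "color (aut n) ` states (aut n) = {1,2}"
proof
  show "color (aut n) ` states (aut n) \<subseteq> {1, 2}" by (auto simp: aut_color)
  have "(0::nat) \<in> states (aut n)" using PP_pos by simp
  moreover have "(8::nat) \<in> states (aut n)" by (simp add: PP_def)
  moreover have "color (aut n) 0 = 2" "color (aut n) 8 = 1" by (simp_all add: aut_color)
  ultimately show "{1, 2} \<subseteq> color (aut n) ` states (aut n)"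
    by (metis empty_subsetI image_eqI insert_subset)
qed

lemma Ans1: "Ans (aut n) 1 = {2}"
  unfolding Ans_def using col_img[of n] by auto

lemma seg_cost_eq: "seg_cost (aut n) w t t' = t' - t"
proof -
  have "{k. t \<le> k \<and> k < t' \<and> incr (aut n) (run (aut n) w k) (w k)} = {t..<t'}" by auto
  then show ?thesis unfolding seg_cost_def by simp
qed

abbreviation col where "col n w t \<equiv> color (aut n) (run (aut n) w t)"

lemma col_12: "col n w t = 1 \<or> col n w t = 2" by (simp add: aut_color)

lemma Cor_eq: "Cor (aut n) w t = (if col n w t = 2 then 0 else
   (INF t' \<in> {t'. t < t' \<and> col n w t' = 2}. enat (t' - t)))"
proof (cases "col n w t = 2")
  case True then show ?thesis unfolding Cor_def by simp
next
  case False
  then have "col n w t = 1" using col_12 by blast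
  then show ?thesis unfolding Cor_def using Ans1[of n] seg_cost_eq[of n w t] by simp
qed

lemma Cor_le: "col n w (t+d) = 2 \<Longrightarrow> 0 < d \<Longrightarrow> Cor (aut n) w t \<le> enat d"
  unfolding Cor_eq by (auto intro!: INF_lower2[where i="t+d"])

lemma Cor_ge: "(\<And>e. 0 < e \<Longrightarrow> e < d \<Longrightarrow> col n w (t+e) \<noteq> 2) \<Longrightarrow> col n w t \<noteq> 2
   \<Longrightarrow> enat d \<le> Cor (aut n) w t"
  unfolding Cor_eq
proof (simp, intro INF_greatest)
  fix t' assume a: "\<And>e. 0 < e \<Longrightarrow> e < d \<Longrightarrow> col n w (t+e) \<noteq> 2"
    and b: "t' \<in> {t'. t < t' \<and> col n w t' = 2}"
  have "\<not> t' - t < d"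
  proof
    assume "t' - t < d"
    then show False using a[of "t'-t"] b by auto
  qed
  then show "enat d \<le> enat (t' - t)" by simp
qed

lemma Cor_inf: "(\<And>e. col n w (t+e) \<noteq> 2) \<Longrightarrow> Cor (aut n) w t = \<infinity>"
proof -
  assume a: "\<And>e. col n w (t+e) \<noteq> 2"
  have h: "{t'. t < t' \<and> col n w t' = 2} = {}"
    using a by (auto, metis le_add_diff_inverse less_imp_le)
  have "Cor (aut n) w t = (INF t' \<in> {t'. t < t' \<and> col n w t' = 2}. enat (t' - t))"
    using a[of 0] Cor_eq[of n w t] by simp
  also have "\<dots> = \<infinity>" unfolding h by (simp add: top_enat_def)
  finally show ?thesis .
qed



declare run.simps(2)[simp del]

lemma trap_stays: "st n w t = 6 \<Longrightarrow> st n w (t+e) = 6"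
  by (induction e) (auto simp: st_Suc stepS_def)

lemma trap_col: "st n w t = 6 \<Longrightarrow> col n w (t+e) \<noteq> 2"
  using trap_stays[of n w t e] by (simp add: col_run)

lemma trap_not_acc: assumes "st n w t = 6" shows "\<not> accepting (aut n) w"
proof -
  have "\<forall>e. Cor (aut n) w (t+e) = \<infinity>"
  proof
    fix e show "Cor (aut n) w (t+e) = \<infinity>"
      using Cor_inf[of n w "t+e"] trap_col[OF assms, of "e + _"] by (simp add: add.assoc)
  qed
  then have "eventually (\<lambda>m. \<infinity> \<le> Cor (aut n) w m) sequentially"
    unfolding eventually_sequentially by (metis le_Suc_ex order_refl)
  then have "\<infinity> \<le> limsup (Cor (aut n) w)" by (intro le_Limsup) auto
  then show ?thesis unfolding accepting_def by (simp add: top.extremum_unique)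
qed

lemma prefix_len_fk: "prefix_len (fk j) i = i + j + 1"
  unfolding prefix_len_def by (induction i) (auto simp: fk_def)

lemma run_cong: "(\<And>i. i < t \<Longrightarrow> w i = w' i) \<Longrightarrow> run A w t = run A w' t"
  by (induction t) (auto simp: run.simps)

lemma outcome_cong: "(\<And>m. m < i + j + 1 \<Longrightarrow> alpha m = alpha' m) \<Longrightarrow>
    outcome (fk j) tau alpha i = outcome (fk j) tau alpha' i"
proof -
  assume a: "\<And>m. m < i + j + 1 \<Longrightarrow> alpha m = alpha' m"
  have e: "map alpha [0..<Suc (i+j)] = map alpha' [0..<Suc (i+j)]" by (rule map_cong) (auto simp: a)
  have e2: "alpha i = alpha' i" using a[of i] by simp
  show ?thesis unfolding outcome_def prefix_len_fk by (simp del: upt_Suc add: e e2)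
qed

lemma outcome_fst: "fst (outcome (fk j) tau alpha i) = alpha i"
  by (simp add: outcome_def)

lemma outcome_snd: "snd (outcome (fk j) tau alpha i) = tau (map alpha [0..<i+j+1])"
  by (simp add: outcome_def prefix_len_fk)

lemma mod_shift: "t mod (p::nat) = r \<Longrightarrow> r + e < p \<Longrightarrow> (t + e) mod p = r + e"
  by (metis mod_add_left_eq mod_less)

lemma limsup_le: "(\<And>m. X m \<le> C) \<Longrightarrow> limsup X \<le> (C::enat)"
  by (intro Limsup_bounded) auto

lemma limsup_ge: "(\<And>m. \<exists>m'\<ge>m. C \<le> X m') \<Longrightarrow> (C::enat) \<le> limsup X"
  unfolding limsup_INF_SUP
  by (intro INF_greatest) (meson SUP_upper2 atLeast_iff)



abbreviation win where "win n j tau \<equiv> winning (fk j) {0,1::nat} {0,1,2::nat} (lang (aut n)) tau"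

lemma win_acc: "win n j tau \<Longrightarrow> alpha \<in> omega_words {0,1} \<Longrightarrow> accepting (aut n) (outcome (fk j) tau alpha)"
  unfolding winning_def lang_def by auto

lemma no_trap: "win n j tau \<Longrightarrow> alpha \<in> omega_words {0,1} \<Longrightarrow> st n (outcome (fk j) tau alpha) t \<noteq> 6"
  using win_acc trap_not_acc by blast

lemma TT_PP: "TT n + 2 = PP n" by (simp add: TT_def PP_def)

lemma flip:
  assumes W: "win n j tau" and j: "j \<le> n" and al: "alpha \<in> omega_words {0,1}"
    and r: "t mod PP n = r" "r < TT n - j"
    and s0: "st n (outcome (fk j) tau alpha) t = 0"
  shows "\<not> snd (outcome (fk j) tau alpha t) \<le> 1"
proof
  define w where "w = outcome (fk j) tau alpha"
  define v where "v = snd (w t)"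
  assume "snd (outcome (fk j) tau alpha t) \<le> 1"
  then have v1: "v \<le> 1" unfolding v_def w_def .
  define tT where "tT = t + (TT n - r)"
  define alpha' where "alpha' = alpha(tT := 1 - v)"
  define w' where "w' = outcome (fk j) tau alpha'"
  have al': "alpha' \<in> omega_words {0,1}"
    using al v1 unfolding alpha'_def omega_words_def by auto
  have agree: "w' i = w i" if "i \<le> t" for i
    unfolding w'_def w_def
  proof (rule outcome_cong)
    fix m assume "m < i + j + 1"
    then have "m \<noteq> tT" using that r unfolding tT_def by linarith
    then show "alpha' m = alpha m" unfolding alpha'_def by simp
  qed
  have "run (aut n) w' (Suc t) = run (aut n) w (Suc t)"
    by (rule run_cong) (simp add: agree)
  then have "st n w' (Suc t) = st n w (Suc t)" unfolding st_def by simp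
  also have "\<dots> = 1 + v"
  proof -
    have "r < TT n" "r \<noteq> TT n + 1" using r by linarith+
    then show ?thesis using s0 r v1 unfolding st_Suc v_def w_def by (simp add: stepS_def)
  qed
  finally have base: "st n w' (Suc t) = 1 + v" .
  have pend: "d < TT n - r \<longrightarrow> (st n w' (Suc t + d) = 1 + v \<or> st n w' (Suc t + d) = 3 + v)" for d
  proof (induction d)
    case 0 then show ?case using base by simp
  next
    case (Suc d)
    show ?case
    proof
      assume d: "Suc d < TT n - r"
      have m: "(Suc t + d) mod PP n = r + 1 + d"
        using mod_shift[of t "PP n" r "1+d"] r d TT_PP[of n] by (simp add: add.assoc)
      have s: "st n w' (Suc t + d) = 1 + v \<or> st n w' (Suc t + d) = 3 + v" using Suc d by simp
      have v2: "(2 + v) mod 2 = v" "(4 + v) mod 2 = v" using v1 by presburger+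
      have "st n w' (Suc t + Suc d) = stepS n (r+1+d) (st n w' (Suc t + d)) (fst (w' (Suc t + d))) (snd (w' (Suc t + d)))"
        using st_Suc[of n w' "Suc t + d"] m by simp
      also have "\<dots> = 3 + v" using s d v1 v2 unfolding stepS_def by auto
      finally show "st n w' (Suc t + Suc d) = 1 + v \<or> st n w' (Suc t + Suc d) = 3 + v" by simp
    qed
  qed
  have tTe: "tT = Suc t + (TT n - r - 1)" unfolding tT_def using r by simp
  have sT: "st n w' tT = 1 + v \<or> st n w' tT = 3 + v"
    using pend[of "TT n - r - 1"] r tTe by simp
  have mT: "tT mod PP n = TT n"
    using mod_shift[of t "PP n" r "TT n - r"] r TT_PP[of n] unfolding tT_def by simp
  have fT: "fst (w' tT) = 1 - v" unfolding w'_def outcome_fst alpha'_def by simp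
  have "st n w' (Suc tT) = 6"
  proof -
    have "v = 0 \<or> v = 1" using v1 by auto
    then show ?thesis using sT unfolding st_Suc mT fT by (auto simp: stepS_def)
  qed
  then show False using no_trap[OF W al'] unfolding w'_def by blast
qed

lemma early_zero:
  assumes W: "win n j tau" and j: "j \<le> n" and al: "alpha \<in> omega_words {0,1}"
  shows "t mod PP n \<le> TT n - j \<Longrightarrow> st n (outcome (fk j) tau alpha) t = 0"
proof (induction t)
  case 0 then show ?case by simp
next
  case (Suc t)
  define w where "w = outcome (fk j) tau alpha"
  show ?case
  proof (cases "Suc t mod PP n = 0")
    case True
    then have "Suc (t mod PP n) = PP n" using mod_Suc[of t "PP n"] by (auto split: if_splits)
    then have "t mod PP n = TT n + 1" using TT_PP[of n] by linarith
    moreover have "st n w t \<noteq> 6" using no_trap[OF W al] unfolding w_def by blast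
    ultimately show ?thesis unfolding w_def[symmetric] st_Suc by (simp add: stepS_def)
  next
    case False
    then have m: "Suc t mod PP n = Suc (t mod PP n)" by (metis mod_Suc)
    then have lt: "t mod PP n < TT n - j" using Suc.prems by simp
    then have z: "st n w t = 0" using Suc.IH unfolding w_def by simp
    have "\<not> snd (w t) \<le> 1" using flip[OF W j al refl lt] z unfolding w_def by blast
    moreover have "t mod PP n < TT n" using lt by linarith
    moreover have "t mod PP n \<noteq> TT n + 1" using lt by linarith
    ultimately show ?thesis unfolding w_def[symmetric] st_Suc using z
      by (simp add: stepS_def)
  qed
qed

lemma lower:
  assumes W: "win n j tau" and j: "j \<le> n"
  shows "enat (TT n - j) \<le> strat_cost (aut n) (fk j) {0,1} tau"
proof -
  define alpha0 :: "nat \<Rightarrow> nat" where "alpha0 = (\<lambda>_. 0)"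
  have al: "alpha0 \<in> omega_words {0,1}" unfolding alpha0_def omega_words_def by simp
  define w where "w = outcome (fk j) tau alpha0"
  have c1: "col n w t \<noteq> 2" if "1 \<le> t mod PP n" "t mod PP n \<le> TT n - j" for t
    using early_zero[OF W j al that(2)] that(1) unfolding w_def[symmetric] col_run by simp
  have cor: "enat (TT n - j) \<le> Cor (aut n) w (m * PP n + 1)" for m
  proof (rule Cor_ge)
    have mm: "(m * PP n + 1 + e) mod PP n = 1 + e" if "e < TT n - j" for e
    proof -
      have lt: "1 + e < PP n" using that TT_PP[of n] by linarith
      have "m * PP n + 1 + e = (1+e) + m * PP n" by simp
      then show ?thesis using lt by (simp only: mod_mult_self1) simp
    qed
    show "col n w (m * PP n + 1 + e) \<noteq> 2" if "0 < e" "e < TT n - j" for e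
      using c1 mm[OF that(2)] that by simp
    show "col n w (m * PP n + 1) \<noteq> 2" using c1 mm[of 0] j by (simp add: TT_def)
  qed
  have "enat (TT n - j) \<le> limsup (Cor (aut n) w)"
  proof (intro limsup_ge)
    fix m
    have "m \<le> m * PP n + 1" using PP_pos[of n] by (cases "PP n") auto
    then show "\<exists>m'\<ge>m. enat (TT n - j) \<le> Cor (aut n) w m'" using cor by blast
  qed
  also have "\<dots> \<le> strat_cost (aut n) (fk j) {0,1} tau"
    unfolding strat_cost_def w_def using al by (rule SUP_upper)
  finally show ?thesis .
qed



definition tauj :: "nat \<Rightarrow> nat \<Rightarrow> nat list \<Rightarrow> nat" where
  "tauj n j xs = (if j + 1 \<le> length xs \<and> (length xs - (j+1)) mod PP n = TT n - j
      then (if last xs = 0 then 0 else 1) else 2)"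

lemma tauj_SO: "tauj n j xs \<in> {0,1,2}" by (simp add: tauj_def)

lemma om01: "alpha \<in> omega_words {0,1} \<Longrightarrow> alpha i = 0 \<or> alpha i = (1::nat)"
  unfolding omega_words_def by auto

lemma tau_out: assumes "alpha \<in> omega_words {0,1}"
  shows "snd (outcome (fk j) (tauj n j) alpha t) = (if t mod PP n = TT n - j then alpha (t+j) else 2)"
proof -
  have l: "last (map alpha [0..<t+j+1]) = alpha (t+j)" by simp
  show ?thesis unfolding outcome_snd tauj_def l using om01[OF assms, of "t+j"] by auto
qed

definition stx :: "nat \<Rightarrow> nat \<Rightarrow> (nat \<Rightarrow> nat) \<Rightarrow> nat \<Rightarrow> nat" where
  "stx n j alpha t = (if t mod PP n \<le> TT n - j then 0 else if t mod PP n = TT n + 1 then 5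
     else if t mod PP n = TT n - j + 1 then 1 + alpha (t - t mod PP n + TT n)
     else 3 + alpha (t - t mod PP n + TT n))"

lemma st_tau:
  assumes j: "j \<le> n" and al: "alpha \<in> omega_words {0,1}"
  shows "st n (outcome (fk j) (tauj n j) alpha) t = stx n j alpha t"
proof (induction t)
  case 0 then show ?case by (simp add: stx_def)
next
  case (Suc t)
  define w where "w = outcome (fk j) (tauj n j) alpha"
  define r where "r = t mod PP n"
  define g where "g = alpha (t - r + TT n)"
  have IH: "st n w t = stx n j alpha t" using Suc unfolding w_def .
  have rP: "r < PP n" unfolding r_def using PP_pos by simp
  have rt: "r \<le> t" unfolding r_def by simp
  have jT: "j < TT n" using j by (simp add: TT_def)
  have g01: "g = 0 \<or> g = 1" unfolding g_def using om01[OF al] by blast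
  have fw: "fst (w t) = alpha t" unfolding w_def outcome_fst ..
  have sw: "snd (w t) = (if r = TT n - j then alpha (t+j) else 2)"
    unfolding w_def r_def using tau_out[OF al] by simp
  have step: "st n w (Suc t) = stepS n r (st n w t) (fst (w t)) (snd (w t))"
    unfolding r_def by (rule st_Suc)
  show ?case unfolding w_def[symmetric]
  proof (cases "r = TT n + 1")
    case True
    have e: "PP n - Suc 0 = Suc (TT n)" using TT_PP[of n] by simp
    have "Suc t mod PP n = 0" using suc_mod[of t n] True e unfolding r_def by simp
    moreover have "st n w t = 5" using IH True jT unfolding stx_def r_def by simp
    ultimately show "st n w (Suc t) = stx n j alpha (Suc t)"
      unfolding step using True by (simp add: stepS_def stx_def)
  next
    case False
    then have rT: "r \<le> TT n" using rP TT_PP[of n] by linarith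
    have ne: "r \<noteq> PP n - 1" using rT TT_PP[of n] by linarith
    have m: "Suc t mod PP n = r + 1" using suc_mod[of t n] ne unfolding r_def by simp
    have g': "alpha (Suc t - Suc t mod PP n + TT n) = g" unfolding m g_def using rt by simp
    show "st n w (Suc t) = stx n j alpha (Suc t)"
    proof (cases "r < TT n - j")
      case True
      then have "st n w t = 0" using IH unfolding stx_def r_def by simp
      moreover have "r < TT n" "r + 1 \<le> TT n - j" using True by linarith+
      ultimately show ?thesis unfolding step sw using True m
        by (simp add: stepS_def stx_def)
    next
      case nlt: False
      show ?thesis
      proof (cases "r = TT n - j")
        case True
        then have s0: "st n w t = 0" using IH unfolding stx_def r_def by simp
        have tj: "t + j = t - r + TT n" using True rt jT by arith
        have sv: "snd (w t) = g" unfolding sw g_def tj[symmetric] using True by simp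
        show ?thesis
        proof (cases "j = 0")
          case True
          have "t - r + TT n = t" using \<open>r = TT n - j\<close> True rt by arith
          then have "fst (w t) = g" unfolding fw g_def by simp
          then show ?thesis unfolding step s0 sv using True \<open>r = TT n - j\<close> m g'
            by (simp add: stepS_def stx_def)
        next
          case False
          have a1: "r < TT n" "r \<noteq> TT n + 1" "\<not> r + 1 \<le> TT n - j" "r + 1 \<noteq> TT n + 1" "r + 1 = TT n - j + 1"
            using \<open>r = TT n - j\<close> False jT by linarith+
          have "g \<le> 1" using g01 by auto
          then show ?thesis unfolding step s0 sv using a1 m g'
            by (simp add: stepS_def stx_def)
        qed
      next
        case False
        then have gt: "TT n - j < r" using nlt by simp
        have sx: "st n w t = 1 + g \<or> st n w t = 3 + g"
        proof -
          have "stx n j alpha t = (if r \<le> TT n - j then 0 else if r = TT n + 1 then 5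
              else if r = TT n - j + 1 then 1 + g else 3 + g)"
            unfolding stx_def r_def[symmetric] g_def[symmetric] ..
          then show ?thesis using IH gt \<open>r \<noteq> TT n + 1\<close> by (cases "r = TT n - j + 1") simp_all
        qed
        show ?thesis
        proof (cases "r = TT n")
          case True
          have "t - r + TT n = t" using True rt by arith
          then have "fst (w t) = g" unfolding fw g_def by simp
          have a1: "\<not> r + 1 \<le> TT n - j" "r \<noteq> TT n + 1"
            using True gt by linarith+
          have gm: "(Suc g + 1) mod 2 = g" "(3 + g + 1) mod 2 = g" "g \<le> 1" using g01 by auto
          from sx show ?thesis
          proof
            assume "st n w t = 1 + g"
            then show ?thesis unfolding step using a1 True m g' gm \<open>fst (w t) = g\<close>
              by (simp add: stepS_def stx_def)
          next
            assume "st n w t = 3 + g"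
            then show ?thesis unfolding step using a1 True m g' gm \<open>fst (w t) = g\<close>
              by (simp add: stepS_def stx_def)
          qed
        next
          case False
          then have "r < TT n" using rT by simp
          have a1: "\<not> r + 1 \<le> TT n - j" "r \<noteq> TT n + 1" "r + 1 \<noteq> TT n + 1" "r + 1 \<noteq> TT n - j + 1"
            using \<open>r < TT n\<close> gt by linarith+
          have gm: "(Suc g + 1) mod 2 = g" "(3 + g + 1) mod 2 = g" "g \<le> 1" using g01 by auto
          from sx show ?thesis
          proof
            assume "st n w t = 1 + g"
            then show ?thesis unfolding step using a1 \<open>r < TT n\<close> m g' gm
              by (simp add: stepS_def stx_def)
          next
            assume "st n w t = 3 + g"
            then show ?thesis unfolding step using a1 \<open>r < TT n\<close> m g' gm
              by (simp add: stepS_def stx_def)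
          qed
        qed
      qed
    qed
  qed
qed



lemma col_tau:
  assumes j: "j \<le> n" and al: "alpha \<in> omega_words {0,1}"
  shows "col n (outcome (fk j) (tauj n j) alpha) t = 2 \<longleftrightarrow>
     (t mod PP n = 0 \<or> t mod PP n = TT n - j + 1 \<or> t mod PP n = TT n + 1)"
proof -
  define r where "r = t mod PP n"
  define g where "g = alpha (t - r + TT n)"
  have g01: "g = 0 \<or> g = 1" unfolding g_def using om01[OF al] by blast
  have sx: "st n (outcome (fk j) (tauj n j) alpha) t = (if r \<le> TT n - j then 0 else if r = TT n + 1 then 5
              else if r = TT n - j + 1 then 1 + g else 3 + g)"
    unfolding st_tau[OF j al] stx_def r_def[symmetric] g_def[symmetric] ..
  show ?thesis unfolding col_run sx r_def[symmetric] using g01 by auto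
qed

lemma upper_Cor:
  assumes j: "j \<le> n" and al: "alpha \<in> omega_words {0,1}"
  shows "Cor (aut n) (outcome (fk j) (tauj n j) alpha) t \<le> enat (TT n - j)"
proof -
  define w where "w = outcome (fk j) (tauj n j) alpha"
  define r where "r = t mod PP n"
  have rP: "r < PP n" unfolding r_def using PP_pos by simp
  have ct: "col n w t' = 2 \<longleftrightarrow> (t' mod PP n = 0 \<or> t' mod PP n = TT n - j + 1 \<or> t' mod PP n = TT n + 1)" for t'
    unfolding w_def by (rule col_tau[OF j al])
  have "Cor (aut n) w t \<le> enat (TT n - j)"
  proof (cases "col n w t = 2")
    case True then show ?thesis using Cor_eq[of n w t] by simp
  next
    case False
    then have r0: "r \<noteq> 0" "r \<noteq> TT n - j + 1" "r \<noteq> TT n + 1" using ct[of t] unfolding r_def by auto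
    show ?thesis
    proof (cases "r \<le> TT n - j")
      case True
      define d where "d = TT n - j + 1 - r"
      have dd: "r + d = TT n - j + 1" "r + d < PP n" "0 < d" "d \<le> TT n - j"
        using True r0 TT_PP[of n] unfolding d_def by linarith+
      have "(t + d) mod PP n = TT n - j + 1" using mod_shift[of t "PP n" r d] dd r_def by simp
      then have "col n w (t+d) = 2" using ct by blast
      then have "Cor (aut n) w t \<le> enat d" using dd by (intro Cor_le)
      then show ?thesis using dd by (meson enat_ord_simps(1) order_trans)
    next
      case False
      define d where "d = TT n + 1 - r"
      have dd: "r + d = TT n + 1" "r + d < PP n" "0 < d" "d \<le> TT n - j"
        using False r0 rP j TT_PP[of n] unfolding d_def TT_def by linarith+
      have "(t + d) mod PP n = TT n + 1" using mod_shift[of t "PP n" r d] dd r_def by simp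
      then have "col n w (t+d) = 2" using ct by blast
      then have "Cor (aut n) w t \<le> enat d" using dd by (intro Cor_le)
      then show ?thesis using dd by (meson enat_ord_simps(1) order_trans)
    qed
  qed
  then show ?thesis unfolding w_def .
qed

lemma tau_win: assumes j: "j \<le> n" shows "win n j (tauj n j)"
  unfolding winning_def strategy_def
proof (intro conjI allI ballI)
  show "tauj n j x \<in> {0,1,2}" for x by (rule tauj_SO)
  fix alpha assume al: "alpha \<in> omega_words {0::nat,1}"
  have "limsup (Cor (aut n) (outcome (fk j) (tauj n j) alpha)) \<le> enat (TT n - j)"
    by (intro limsup_le upper_Cor[OF j al])
  then have acc: "accepting (aut n) (outcome (fk j) (tauj n j) alpha)"
    unfolding accepting_def using enat_ord_simps(4) le_less_trans by blast
  have "outcome (fk j) (tauj n j) alpha \<in> omega_words (alph (aut n))"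
    unfolding omega_words_def
  proof (intro CollectI allI)
    fix i
    have "alpha i \<in> {0,1}" using al unfolding omega_words_def by blast
    then show "outcome (fk j) (tauj n j) alpha i \<in> alph (aut n)"
      unfolding outcome_def aut_sel by (intro SigmaI tauj_SO)
  qed
  then show "outcome (fk j) (tauj n j) alpha \<in> lang (aut n)" unfolding lang_def using acc by simp
qed

lemma tau_cost_le: assumes j: "j \<le> n"
  shows "strat_cost (aut n) (fk j) {0,1} (tauj n j) \<le> enat (TT n - j)"
  unfolding strat_cost_def
  by (intro SUP_least limsup_le upper_Cor[OF j]) auto

lemma fin_buchi: "finitary_buchi (aut n)"
proof -
  have fs: "states (aut n) \<subseteq> {..<8 * PP n}" by auto
  have cl: "delta (aut n) q a \<in> states (aut n)" if "q \<in> states (aut n)" for q a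
  proof -
    define X where "X = (if q div 8 = PP n - 1 then 0 else q div 8 + 1)"
    define S where "S = stepS n (q div 8) (q mod 8) (fst a) (snd a)"
    have S6: "S \<le> 6" unfolding S_def by (rule stepS_le)
    have XP: "X < PP n" using that PP_pos[of n] unfolding X_def by auto
    have "delta (aut n) q a = 8 * X + S" unfolding X_def S_def by simp
    then show ?thesis using S6 XP enc_div[of S X] enc_mod[of S X] by simp
  qed
  show ?thesis unfolding finitary_buchi_def pac_wf_def
    using finite_subset[OF fs] cl col_img[of n] PP_pos[of n] by auto
qed

lemma card_states: "0 < n \<Longrightarrow> card (states (aut n)) \<le> 48 * n\<^sup>2"
proof -
  assume n: "0 < n"
  have fs: "states (aut n) \<subseteq> {..<8 * PP n}" by auto
  then have "card (states (aut n)) \<le> 8 * PP n" using card_mono[OF _ fs] by simp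
  moreover have "8 * PP n \<le> 48 * n\<^sup>2"
  proof -
    obtain k where k: "n = Suc k" using n by (cases n) auto
    show ?thesis unfolding PP_def power2_eq_square k by simp
  qed
  ultimately show ?thesis by linarith
qed

theorem theorem7:
  "\<exists>c::nat. \<forall>n::nat. n > 0 \<longrightarrow>
     (\<exists>(SI::nat set) (SO::nat set) (A::(nat, nat \<times> nat) pac).
        finite SI \<and> finite SO \<and> SI \<noteq> {} \<and> SO \<noteq> {} \<and>
        alph A = SI \<times> SO \<and> finitary_buchi A \<and> card (states A) \<le> c * n\<^sup>2 \<and>
        (\<forall>j \<le> n. \<exists>tau. optimal A (fk j) SI SO tau \<and>
             strat_cost A (fk j) SI tau = enat (2 * (n + 1) - j)))"
proof (intro exI[of _ 48] allI impI)
  fix n :: nat assume n: "0 < n"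
  have J: "\<exists>tau. optimal (aut n) (fk j) {0,1} {0,1,2} tau \<and>
             strat_cost (aut n) (fk j) {0,1} tau = enat (2 * (n + 1) - j)" if j: "j \<le> n" for j
  proof (intro exI conjI)
    have e: "TT n - j = 2 * (n + 1) - j" by (simp add: TT_def)
    show "optimal (aut n) (fk j) {0,1} {0,1,2} (tauj n j)"
      unfolding optimal_def
      using tau_win[OF j] tau_cost_le[OF j] lower[OF _ j] order_trans by blast
    show "strat_cost (aut n) (fk j) {0,1} (tauj n j) = enat (2 * (n + 1) - j)"
      using tau_cost_le[OF j] lower[OF tau_win[OF j] j] unfolding e by simp
  qed
  show "\<exists>(SI::nat set) (SO::nat set) (A::(nat, nat \<times> nat) pac).
        finite SI \<and> finite SO \<and> SI \<noteq> {} \<and> SO \<noteq> {} \<and>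
        alph A = SI \<times> SO \<and> finitary_buchi A \<and> card (states A) \<le> 48 * n\<^sup>2 \<and>
        (\<forall>j \<le> n. \<exists>tau. optimal A (fk j) SI SO tau \<and>
             strat_cost A (fk j) SI tau = enat (2 * (n + 1) - j))"
    using J fin_buchi[of n] card_states[OF n]
    by (intro exI[of _ "{0,1}"] exI[of _ "{0,1,2}"] exI[of _ "aut n"]) simp
qed

end
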